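(* Let $P$ be a finite non-abelian $p$-group, $p$ a prime. Then $P$ is exponent-critical and has more than one abelian maximal subgroup (i.e. $P$ is of type $\mathcal{B}$) if and only if $P$ is $2$-generated and its derived subgroup $P'$ has order $p$.
   Context: A finite group $G$ is exponent-critical if $\exp(G)$ is not the least common multiple of the exponents of the proper non-abelian subgroups of $G$. An exponent-critical $p$-group is said to be of type $\mathcal{B}$ if it has more than one abelian maximal subgroup. *)

theory Defs
  imports "HOL-Algebra.Algebra"
begin

definition grp_exp :: "('a, 'b) monoid_scheme \<Rightarrow> 'a set \<Rightarrow> nat" where
  "grp_exp G H = Lcm (group.ord G ` H)"

definition abelian_set :: "('a, 'b) monoid_scheme \<Rightarrow> 'a set \<Rightarrow> bool" where
  "abelian_set G H \<longleftrightarrow> (\<forall>x\<in>H. \<forall>y\<in>H. x \<otimes>\<^bsub>G\<^esub> y = y \<otimes>\<^bsub>G\<^esub> x)"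

definition exponent_critical :: "('a, 'b) monoid_scheme \<Rightarrow> bool" where
  "exponent_critical G \<longleftrightarrow>
     grp_exp G (carrier G) \<noteq>
       Lcm {grp_exp G H | H. subgroup H G \<and> H \<noteq> carrier G \<and> \<not> abelian_set G H}"

definition maximal_subgroup :: "'a set \<Rightarrow> ('a, 'b) monoid_scheme \<Rightarrow> bool" where
  "maximal_subgroup M G \<longleftrightarrow> subgroup M G \<and> M \<noteq> carrier G \<and>
     (\<forall>H. subgroup H G \<and> M \<subseteq> H \<longrightarrow> H = M \<or> H = carrier G)"

definition type_B :: "('a, 'b) monoid_scheme \<Rightarrow> bool" where
  "type_B G \<longleftrightarrow> exponent_critical G \<and>
     (\<exists>M1 M2. M1 \<noteq> M2 \<and> maximal_subgroup M1 G \<and> maximal_subgroup M2 G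
        \<and> abelian_set G M1 \<and> abelian_set G M2)"

definition two_generated :: "('a, 'b) monoid_scheme \<Rightarrow> bool" where
  "two_generated G \<longleftrightarrow> (\<exists>a\<in>carrier G. \<exists>b\<in>carrier G. generate G {a, b} = carrier G)"

end

theory Submission
  imports Defs
begin
definition cmt :: "('a, 'b) monoid_scheme \<Rightarrow> 'a \<Rightarrow> 'a \<Rightarrow> 'a" where
  "cmt G x y = x \<otimes>\<^bsub>G\<^esub> y \<otimes>\<^bsub>G\<^esub> inv\<^bsub>G\<^esub> x \<otimes>\<^bsub>G\<^esub> inv\<^bsub>G\<^esub> y"

definition ctr :: "('a, 'b) monoid_scheme \<Rightarrow> 'a set" where
  "ctr G = {z \<in> carrier G. \<forall>g\<in>carrier G. z \<otimes>\<^bsub>G\<^esub> g = g \<otimes>\<^bsub>G\<^esub> z}"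

definition cent :: "('a, 'b) monoid_scheme \<Rightarrow> 'a \<Rightarrow> 'a set" where
  "cent G a = {g \<in> carrier G. g \<otimes>\<^bsub>G\<^esub> a = a \<otimes>\<^bsub>G\<^esub> g}"

context group begin

lemma cmt_closed [simp]: "x \<in> carrier G \<Longrightarrow> y \<in> carrier G \<Longrightarrow> cmt G x y \<in> carrier G"
  by (simp add: cmt_def)

lemma cancel_l1 [simp]: "x \<in> carrier G \<Longrightarrow> y \<in> carrier G \<Longrightarrow> inv x \<otimes> (x \<otimes> y) = y"
  by (simp add: m_assoc[symmetric])

lemma cancel_l2 [simp]: "x \<in> carrier G \<Longrightarrow> y \<in> carrier G \<Longrightarrow> x \<otimes> (inv x \<otimes> y) = y"
  by (simp add: m_assoc[symmetric])

lemma cmt_swap: "x \<in> carrier G \<Longrightarrow> y \<in> carrier G \<Longrightarrow> cmt G x y \<otimes> (y \<otimes> x) = x \<otimes> y"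
  by (simp add: cmt_def m_assoc)

lemma cmt_char:
  assumes "x \<in> carrier G" "y \<in> carrier G" "c \<in> carrier G" "c \<otimes> (y \<otimes> x) = x \<otimes> y"
  shows "c = cmt G x y"
proof -
  have "c \<otimes> (y \<otimes> x) = cmt G x y \<otimes> (y \<otimes> x)" using assms cmt_swap[of x y] by simp
  then show ?thesis using assms right_cancel[of c "y \<otimes> x" "cmt G x y"] by simp
qed

lemma cmt_eq_one: "x \<in> carrier G \<Longrightarrow> y \<in> carrier G \<Longrightarrow> cmt G x y = \<one> \<longleftrightarrow> x \<otimes> y = y \<otimes> x"
proof
  assume "x \<in> carrier G" "y \<in> carrier G" "cmt G x y = \<one>"
  then show "x \<otimes> y = y \<otimes> x" using cmt_swap[of x y] by simp
next
  assume "x \<in> carrier G" "y \<in> carrier G" "x \<otimes> y = y \<otimes> x"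
  then show "cmt G x y = \<one>" using cmt_char[of x y \<one>] by simp
qed

lemma cmt_inv: "x \<in> carrier G \<Longrightarrow> y \<in> carrier G \<Longrightarrow> inv (cmt G x y) = cmt G y x"
  by (simp add: cmt_def inv_mult_group m_assoc)

lemma ctr_comm: "z \<in> ctr G \<Longrightarrow> g \<in> carrier G \<Longrightarrow> z \<otimes> g = g \<otimes> z"
  by (auto simp: ctr_def)

lemma ctr_carrier: "z \<in> ctr G \<Longrightarrow> z \<in> carrier G"
  by (auto simp: ctr_def)

lemma comm_inv_aux: assumes "x \<in> carrier G" "g \<in> carrier G" "x \<otimes> g = g \<otimes> x"
  shows "inv x \<otimes> g = g \<otimes> inv x"
proof -
  have "inv x \<otimes> g = inv x \<otimes> (g \<otimes> x) \<otimes> inv x" using assms(1,2) by (simp add: m_assoc)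
  also have "\<dots> = inv x \<otimes> (x \<otimes> g) \<otimes> inv x" using assms(3) by simp
  also have "\<dots> = g \<otimes> inv x" using assms(1,2) by (simp add: m_assoc)
  finally show ?thesis .
qed

lemma comm_mult_aux: assumes "x \<in> carrier G" "y \<in> carrier G" "g \<in> carrier G" "x \<otimes> g = g \<otimes> x"
   "y \<otimes> g = g \<otimes> y" shows "x \<otimes> y \<otimes> g = g \<otimes> (x \<otimes> y)"
proof -
  have "x \<otimes> y \<otimes> g = x \<otimes> (y \<otimes> g)" using assms(1-3) by (simp add: m_assoc)
  also have "\<dots> = x \<otimes> (g \<otimes> y)" using assms(5) by simp
  also have "\<dots> = (x \<otimes> g) \<otimes> y" using assms(1-3) by (simp add: m_assoc)
  also have "\<dots> = (g \<otimes> x) \<otimes> y" using assms(4) by simp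
  also have "\<dots> = g \<otimes> (x \<otimes> y)" using assms(1-3) by (simp add: m_assoc)
  finally show ?thesis .
qed

lemma ctr_subgroup: "subgroup (ctr G) G"
proof (rule subgroupI)
  show "ctr G \<subseteq> carrier G" by (auto simp: ctr_def)
  show "ctr G \<noteq> {}" using one_closed by (auto simp: ctr_def)
  fix x y assume x: "x \<in> ctr G" and y: "y \<in> ctr G"
  have xc: "x \<in> carrier G" and yc: "y \<in> carrier G" using x y ctr_carrier by auto
  show "inv x \<in> ctr G" unfolding ctr_def
  proof (intro CollectI conjI ballI)
    show "inv x \<in> carrier G" using xc by simp
    fix g assume g: "g \<in> carrier G"
    show "inv x \<otimes> g = g \<otimes> inv x" using comm_inv_aux[OF xc g ctr_comm[OF x g]] .
  qed
  show "x \<otimes> y \<in> ctr G" unfolding ctr_def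
  proof (intro CollectI conjI ballI)
    show "x \<otimes> y \<in> carrier G" using xc yc by simp
    fix g assume g: "g \<in> carrier G"
    show "x \<otimes> y \<otimes> g = g \<otimes> (x \<otimes> y)" using comm_mult_aux[OF xc yc g ctr_comm[OF x g] ctr_comm[OF y g]] .
  qed
qed

lemma cent_subgroup: assumes a: "a \<in> carrier G" shows "subgroup (cent G a) G"
proof (rule subgroupI)
  show "cent G a \<subseteq> carrier G" by (auto simp: cent_def)
  show "cent G a \<noteq> {}" using one_closed assms by (auto simp: cent_def)
  fix x y assume x: "x \<in> cent G a" and y: "y \<in> cent G a"
  have xc: "x \<in> carrier G" "x \<otimes> a = a \<otimes> x" using x by (auto simp: cent_def)
  have yc: "y \<in> carrier G" "y \<otimes> a = a \<otimes> y" using y by (auto simp: cent_def)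
  show "inv x \<in> cent G a" unfolding cent_def
    using comm_inv_aux[OF xc(1) a xc(2)] xc(1) by simp
  show "x \<otimes> y \<in> cent G a" unfolding cent_def
    using comm_mult_aux[OF xc(1) yc(1) a xc(2) yc(2)] xc(1) yc(1) by simp
qed

lemma cmt_ctr_left: "z \<in> ctr G \<Longrightarrow> y \<in> carrier G \<Longrightarrow> cmt G z y = \<one>"
  by (simp add: cmt_eq_one ctr_carrier ctr_comm)

lemma cmt_ctr_right: "z \<in> ctr G \<Longrightarrow> y \<in> carrier G \<Longrightarrow> cmt G y z = \<one>"
  by (simp add: cmt_eq_one ctr_carrier ctr_comm)

lemma pow_cmt_same: "x \<in> carrier G \<Longrightarrow> cmt G (x [^] (i::int)) (x [^] (j::int)) = \<one>"
  by (simp add: cmt_eq_one flip: int_pow_mult add.commute)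

end

locale cc = group +
  assumes CC: "\<And>x y. x \<in> carrier G \<Longrightarrow> y \<in> carrier G \<Longrightarrow> cmt G x y \<in> ctr G"
begin

lemma cmt_comm: "x \<in> carrier G \<Longrightarrow> y \<in> carrier G \<Longrightarrow> g \<in> carrier G \<Longrightarrow> cmt G x y \<otimes> g = g \<otimes> cmt G x y"
  using CC ctr_comm by blast

lemma cmt_mult_left:
  assumes x: "x \<in> carrier G" and y: "y \<in> carrier G" and z: "z \<in> carrier G"
  shows "cmt G (x \<otimes> y) z = cmt G x z \<otimes> cmt G y z"
proof (rule sym, rule cmt_char)
  show "cmt G x z \<otimes> cmt G y z \<otimes> (z \<otimes> (x \<otimes> y)) = x \<otimes> y \<otimes> z"
  proof -
    have "x \<otimes> y \<otimes> z = x \<otimes> (cmt G y z \<otimes> (z \<otimes> y))" using cmt_swap[OF y z] x y z by (simp add: m_assoc)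
    also have "\<dots> = cmt G y z \<otimes> ((x \<otimes> z) \<otimes> y)" using x y z cmt_comm[OF y z x]
      by (simp add: m_assoc[symmetric])
    also have "\<dots> = cmt G y z \<otimes> (cmt G x z \<otimes> (z \<otimes> x) \<otimes> y)" using cmt_swap[OF x z] by simp
    also have "\<dots> = (cmt G y z \<otimes> cmt G x z) \<otimes> (z \<otimes> (x \<otimes> y))" using x y z
      by (simp add: m_assoc)
    also have "\<dots> = cmt G x z \<otimes> cmt G y z \<otimes> (z \<otimes> (x \<otimes> y))" using x y z cmt_comm[OF y z, of "cmt G x z"]
      by simp
    finally show ?thesis by simp
  qed
qed (use x y z in auto)

lemma cmt_mult_right:
  assumes x: "x \<in> carrier G" and y: "y \<in> carrier G" and z: "z \<in> carrier G"
  shows "cmt G x (y \<otimes> z) = cmt G x y \<otimes> cmt G x z"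
proof -
  have "cmt G x (y \<otimes> z) = inv (cmt G (y \<otimes> z) x)" using x y z by (simp add: cmt_inv)
  also have "\<dots> = inv (cmt G y x \<otimes> cmt G z x)" using cmt_mult_left x y z by simp
  also have "\<dots> = inv (cmt G z x) \<otimes> inv (cmt G y x)" using x y z by (simp add: inv_mult_group)
  also have "\<dots> = cmt G x z \<otimes> cmt G x y" using x y z by (simp add: cmt_inv)
  also have "\<dots> = cmt G x y \<otimes> cmt G x z" using x y z cmt_comm[of x y "cmt G x z"] by simp
  finally show ?thesis .
qed

lemma cmt_pow_left_nat:
  assumes x: "x \<in> carrier G" and y: "y \<in> carrier G"
  shows "cmt G (x [^] (k::nat)) y = cmt G x y [^] k"
proof (induction k)
  case 0 then show ?case using y by (simp add: cmt_eq_one)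
next
  case (Suc k) then show ?case using x y
    by (simp add: cmt_mult_left)
qed

lemma cmt_inv_left:
  assumes x: "x \<in> carrier G" and y: "y \<in> carrier G"
  shows "cmt G (inv x) y = inv (cmt G x y)"
proof -
  have "cmt G x y \<otimes> cmt G (inv x) y = \<one>"
  proof -
    have "cmt G x y \<otimes> cmt G (inv x) y = cmt G (x \<otimes> inv x) y" using cmt_mult_left[OF x inv_closed[OF x] y] by simp
    also have "\<dots> = \<one>" using x y by (simp add: cmt_eq_one)
    finally show ?thesis .
  qed
  then have "inv (cmt G x y) \<otimes> (cmt G x y \<otimes> cmt G (inv x) y) = inv (cmt G x y)" using x y by simp
  then show ?thesis using x y by simp
qed

lemma cmt_pow_left:
  assumes x: "x \<in> carrier G" and y: "y \<in> carrier G"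
  shows "cmt G (x [^] (k::int)) y = cmt G x y [^] k"
proof (cases "k \<ge> 0")
  case True
  then obtain m::nat where m: "k = int m" using nonneg_eq_int by blast
  then show ?thesis using cmt_pow_left_nat[OF x y, of m] x y by (simp add: int_pow_int)
next
  case False
  then have "k = - int (nat (-k))" by simp
  then obtain m::nat where "k = - int m" by blast
  then show ?thesis using x y cmt_pow_left_nat[OF x y, of m]
    by (simp add: int_pow_neg_int cmt_inv_left)
qed

lemma cmt_pow_right:
  assumes x: "x \<in> carrier G" and y: "y \<in> carrier G"
  shows "cmt G x (y [^] (k::int)) = cmt G x y [^] k"
proof -
  have "cmt G x (y [^] k) = inv (cmt G (y [^] k) x)" using x y by (simp add: cmt_inv)
  also have "\<dots> = inv (cmt G y x [^] k)" using cmt_pow_left x y by simp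
  also have "\<dots> = (inv (cmt G y x)) [^] k" using x y by (simp add: int_pow_inv)
  also have "\<dots> = cmt G x y [^] k" using x y by (simp add: cmt_inv)
  finally show ?thesis .
qed

end

context group begin

lemma ctr_lcomm: "w \<in> ctr G \<Longrightarrow> y \<in> carrier G \<Longrightarrow> z \<in> carrier G \<Longrightarrow> y \<otimes> (w \<otimes> z) = w \<otimes> (y \<otimes> z)"
  by (metis ctr_carrier ctr_comm m_assoc)

lemma ctr_comm2: "w \<in> ctr G \<Longrightarrow> y \<in> carrier G \<Longrightarrow> y \<otimes> w = w \<otimes> y"
  by (rule ctr_comm[symmetric])

lemma cmt_in_derived: "x \<in> carrier G \<Longrightarrow> y \<in> carrier G \<Longrightarrow> cmt G x y \<in> derived G (carrier G)"
  unfolding derived_def cmt_def by (rule generate.incl) blast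

end

context cc begin

lemma derived_ctr: "derived G (carrier G) \<subseteq> ctr G"
  unfolding derived_def
  by (rule generate_subgroup_incl[OF _ ctr_subgroup]) (auto intro: CC[unfolded cmt_def])

lemma derived_sub: "subgroup (derived G (carrier G)) G"
  by (simp add: derived_is_subgroup)

end

locale cc2 = cc +
  fixes a b
  assumes a: "a \<in> carrier G" and b: "b \<in> carrier G"
    and gen: "generate G {a, b} = carrier G"
begin

definition rep where "rep g i j \<longleftrightarrow> (\<exists>w\<in>derived G (carrier G). g = a [^] (i::int) \<otimes> b [^] (j::int) \<otimes> w)"

lemma W_ctr: "w \<in> derived G (carrier G) \<Longrightarrow> w \<in> ctr G"
  using derived_ctr by blast

lemma W_car: "w \<in> derived G (carrier G) \<Longrightarrow> w \<in> carrier G"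
  using derived_ctr ctr_carrier by blast

lemma rep_car: "rep g i j \<Longrightarrow> g \<in> carrier G"
  unfolding rep_def using a b W_car by auto

lemma rep_mult:
  assumes "rep g i j" "rep h r s"
  shows "rep (g \<otimes> h) (i + r) (j + s)"
proof -
  obtain w where w: "w \<in> derived G (carrier G)" "g = a [^] i \<otimes> b [^] j \<otimes> w" using assms(1) rep_def by auto
  obtain w' where w': "w' \<in> derived G (carrier G)" "h = a [^] r \<otimes> b [^] s \<otimes> w'" using assms(2) rep_def by auto
  define c where "c = cmt G (b [^] j) (a [^] r)"
  have cW: "c \<in> derived G (carrier G)" unfolding c_def using a b by (simp add: cmt_in_derived)
  have cc: "c \<in> ctr G" using W_ctr cW by blast
  have wc: "w \<in> ctr G" "w' \<in> ctr G" using W_ctr w w' by auto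
  have car: "a [^] i \<in> carrier G" "b [^] j \<in> carrier G" "a [^] r \<in> carrier G" "b [^] s \<in> carrier G"
     "w \<in> carrier G" "w' \<in> carrier G" "c \<in> carrier G"
    using a b w(1) w'(1) cW W_car by auto
  have sw: "b [^] j \<otimes> a [^] r = c \<otimes> (a [^] r \<otimes> b [^] j)"
    unfolding c_def using cmt_swap[of "b [^] j" "a [^] r"] a b by simp
  have sw2: "b [^] j \<otimes> (a [^] r \<otimes> z) = c \<otimes> (a [^] r \<otimes> (b [^] j \<otimes> z))" if "z \<in> carrier G" for z
    using sw car that by (metis m_assoc m_closed)
  have "g \<otimes> h = a [^] i \<otimes> (b [^] j \<otimes> (a [^] r \<otimes> (b [^] s \<otimes> (w \<otimes> w'))))"
    using w w' car wc by (simp add: m_assoc ctr_lcomm)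
  also have "\<dots> = a [^] i \<otimes> (c \<otimes> (a [^] r \<otimes> (b [^] j \<otimes> (b [^] s \<otimes> (w \<otimes> w')))))"
    using sw2 car by simp
  also have "\<dots> = (a [^] i \<otimes> a [^] r) \<otimes> (b [^] j \<otimes> b [^] s) \<otimes> (c \<otimes> w \<otimes> w')"
    using car cc wc by (simp add: m_assoc ctr_lcomm)
  also have "\<dots> = a [^] (i + r) \<otimes> b [^] (j + s) \<otimes> (c \<otimes> w \<otimes> w')"
    using a b by (simp add: int_pow_mult)
  finally show ?thesis unfolding rep_def
    using cW w w' derived_sub by (metis subgroup.m_closed)
qed

lemma rep_inv:
  assumes "rep g i j"
  shows "rep (inv g) (- i) (- j)"
proof -
  obtain w where w: "w \<in> derived G (carrier G)" "g = a [^] i \<otimes> b [^] j \<otimes> w" using assms(1) rep_def by auto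
  define c where "c = cmt G (inv (b [^] j)) (inv (a [^] i))"
  have cW: "c \<in> derived G (carrier G)" unfolding c_def using a b by (simp add: cmt_in_derived)
  have cc: "c \<in> ctr G" using W_ctr cW by blast
  have wc: "w \<in> ctr G" "inv w \<in> ctr G" using W_ctr w ctr_subgroup subgroup.m_inv_closed by (auto simp: subgroup.m_inv_closed)
  have car: "a [^] i \<in> carrier G" "b [^] j \<in> carrier G" "w \<in> carrier G" "c \<in> carrier G"
    using a b w(1) cW W_car by auto
  have sw: "inv (b [^] j) \<otimes> inv (a [^] i) = c \<otimes> (inv (a [^] i) \<otimes> inv (b [^] j))"
    unfolding c_def using cmt_swap a b by simp
  have "inv g = inv w \<otimes> (inv (b [^] j) \<otimes> inv (a [^] i))"
    using w car by (simp add: inv_mult_group m_assoc)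
  also have "\<dots> = inv w \<otimes> (c \<otimes> (inv (a [^] i) \<otimes> inv (b [^] j)))" using sw by simp
  also have "\<dots> = inv (a [^] i) \<otimes> inv (b [^] j) \<otimes> (c \<otimes> inv w)"
    using car cc wc by (simp add: m_assoc ctr_lcomm ctr_comm2)
  also have "\<dots> = a [^] (- i) \<otimes> b [^] (- j) \<otimes> (c \<otimes> inv w)"
    using a b by (simp add: int_pow_neg)
  finally show ?thesis unfolding rep_def
    using cW w derived_sub by (metis subgroup.m_closed subgroup.m_inv_closed)
qed

lemma rep_pow_nat:
  assumes "rep g i j"
  shows "rep (g [^] (k::nat)) (int k * i) (int k * j)"
proof (induction k)
  case 0
  have "g [^] (0::nat) = a [^] (int 0 * i) \<otimes> b [^] (int 0 * j) \<otimes> \<one>" using a b by simp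
  then show ?case unfolding rep_def using subgroup.one_closed[OF derived_sub] by blast
next
  case (Suc k)
  have "rep (g [^] k \<otimes> g) (int k * i + i) (int k * j + j)" using rep_mult[OF Suc assms] .
  then show ?case by (simp add: algebra_simps)
qed

lemma rep_pow:
  assumes "rep g i j"
  shows "rep (g [^] (k::int)) (k * i) (k * j)"
proof (cases "k \<ge> 0")
  case True
  then have "k = int (nat k)" by simp
  then show ?thesis using rep_pow_nat[OF assms, of "nat k"] rep_car[OF assms] by (metis int_pow_int)
next
  case False
  then have "k = - int (nat (-k))" by simp
  then obtain m::nat where m: "k = - int m" by blast
  have "rep (inv (g [^] m)) (- (int m * i)) (- (int m * j))" using rep_inv[OF rep_pow_nat[OF assms]] .
  then show ?thesis using m rep_car[OF assms] by (simp add: int_pow_neg_int)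
qed

lemma rep_exists:
  assumes "g \<in> carrier G" shows "\<exists>i j. rep g i j"
proof -
  have "subgroup {g \<in> carrier G. \<exists>i j. rep g i j} G"
  proof (rule subgroupI)
    show "{g \<in> carrier G. \<exists>i j. rep g i j} \<noteq> {}"
      using rep_pow_nat[of _ 0 0] unfolding rep_def using derived_sub subgroup.one_closed a b
      by (metis (mono_tags, lifting) empty_iff int_pow_0 mem_Collect_eq one_closed r_one)
  next
    fix g assume "g \<in> {g \<in> carrier G. \<exists>i j. rep g i j}"
    then obtain i j where "rep g i j" "g \<in> carrier G" by auto
    then show "inv g \<in> {g \<in> carrier G. \<exists>i j. rep g i j}" using rep_inv[of g i j] by blast
  next
    fix g h assume "g \<in> {g \<in> carrier G. \<exists>i j. rep g i j}" "h \<in> {g \<in> carrier G. \<exists>i j. rep g i j}"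
    then obtain i j r s where "rep g i j" "g \<in> carrier G" "rep h r s" "h \<in> carrier G" by auto
    then show "g \<otimes> h \<in> {g \<in> carrier G. \<exists>i j. rep g i j}" using rep_mult[of g i j h r s] by blast
  qed auto
  moreover have "rep a 1 0" "rep b 0 1"
  proof -
    have "a = a [^] (1::int) \<otimes> b [^] (0::int) \<otimes> \<one>" "b = a [^] (0::int) \<otimes> b [^] (1::int) \<otimes> \<one>"
      using a b by simp_all
    then show "rep a 1 0" "rep b 0 1" unfolding rep_def using subgroup.one_closed[OF derived_sub] by blast+
  qed
  ultimately have "generate G {a, b} \<subseteq> {g \<in> carrier G. \<exists>i j. rep g i j}"
    using a b by (intro generate_subgroup_incl) auto
  then show ?thesis using gen assms by auto
qed

lemma rep_cmt:
  assumes "rep x i j" "rep y r s"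
  shows "cmt G x y = cmt G a b [^] (i * s - j * r)"
proof -
  obtain w where w: "w \<in> derived G (carrier G)" "x = a [^] i \<otimes> b [^] j \<otimes> w" using assms(1) rep_def by auto
  obtain w' where w': "w' \<in> derived G (carrier G)" "y = a [^] r \<otimes> b [^] s \<otimes> w'" using assms(2) rep_def by auto
  have wc: "w \<in> ctr G" "w' \<in> ctr G" using W_ctr w w' by auto
  have car: "a [^] i \<in> carrier G" "b [^] j \<in> carrier G" "a [^] r \<in> carrier G" "b [^] s \<in> carrier G"
     "w \<in> carrier G" "w' \<in> carrier G"
    using a b w(1) w'(1) W_car by auto
  have yc: "y \<in> carrier G" using w' car by simp
  have aa: "cmt G a a = \<one>" "cmt G b b = \<one>" using a b by (simp_all add: cmt_eq_one)
  have "cmt G x y = cmt G (a [^] i) y \<otimes> cmt G (b [^] j) y"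
    using w car yc wc by (simp add: cmt_mult_left cmt_ctr_left)
  also have "cmt G (a [^] i) y = cmt G a b [^] (i * s)"
    using w' car wc a b aa by (simp add: cmt_mult_right cmt_ctr_right pow_cmt_same[of a i r, simplified]
       cmt_pow_left cmt_pow_right int_pow_pow)
  also have "cmt G (b [^] j) y = cmt G a b [^] (- (j * r))"
  proof -
    have "cmt G (b [^] j) y = cmt G (b [^] j) (a [^] r)"
      using w' car wc a b aa by (simp add: cmt_mult_right cmt_ctr_right cmt_pow_left cmt_pow_right)
    also have "\<dots> = (inv (cmt G a b)) [^] (j * r)"
      using a b by (simp add: cmt_pow_left cmt_pow_right int_pow_pow cmt_inv)
    finally show ?thesis using a b by (simp add: int_pow_inv int_pow_neg)
  qed
  finally show ?thesis using a b by (simp add: int_pow_mult[symmetric] algebra_simps)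
qed

end

lemma fix_mod:
  assumes act: "group_action H E \<phi>" and ordH: "card (carrier H) = p ^ k" and pr: "Factorial_Ring.prime (p::nat)"
    and OE: "SS \<subseteq> E" and finSS: "finite SS"
    and inv: "\<And>h x. h \<in> carrier H \<Longrightarrow> x \<in> SS \<Longrightarrow> \<phi> h x \<in> SS"
  shows "card SS mod p = card {x \<in> SS. \<forall>h\<in>carrier H. \<phi> h x = x} mod p"
proof -
  interpret A: group_action H E \<phi> by (rule act)
  have grpH: "group H" using act unfolding group_action_def group_hom_def by blast
  define F where "F = {x \<in> SS. \<forall>h\<in>carrier H. \<phi> h x = x}"
  define R where "R = SS - F"
  have bk: "\<phi> (inv\<^bsub>H\<^esub> h) (\<phi> h x) = x" if "h \<in> carrier H" "x \<in> E" for h x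
  proof -
    have "\<phi> (inv\<^bsub>H\<^esub> h) (\<phi> h x) = \<phi> (inv\<^bsub>H\<^esub> h \<otimes>\<^bsub>H\<^esub> h) x"
      using A.composition_rule[of x "inv\<^bsub>H\<^esub> h" h] that grpH by (simp add: group.inv_closed)
    also have "\<dots> = \<phi> \<one>\<^bsub>H\<^esub> x" using that grpH by (simp add: group.l_inv)
    also have "\<dots> = x" using A.id_eq_one[symmetric] that by (metis restrict_apply')
    finally show ?thesis .
  qed
  have orbR: "orbit H \<phi> x \<subseteq> R" if "x \<in> R" for x
  proof
    fix y assume "y \<in> orbit H \<phi> x"
    then obtain h where h: "h \<in> carrier H" "y = \<phi> h x" unfolding orbit_def by auto
    have xO: "x \<in> SS" using that R_def by auto
    have yO: "y \<in> SS" using inv h xO by auto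
    show "y \<in> R"
    proof (rule ccontr)
      assume "y \<notin> R"
      then have yF: "\<forall>g\<in>carrier H. \<phi> g y = y" using yO R_def F_def by auto
      have "x = \<phi> (inv\<^bsub>H\<^esub> h) y" using bk h xO OE by auto
      also have "\<dots> = y" using yF h grpH by (simp add: group.inv_closed)
      finally have "x = y" .
      then have "x \<in> F" using yF xO F_def by auto
      then show False using that R_def by auto
    qed
  qed
  have orbp: "p dvd card (orbit H \<phi> x)" if "x \<in> R" for x
  proof -
    have xE: "x \<in> E" using that R_def OE by auto
    have "card (orbit H \<phi> x) * card (stabilizer H \<phi> x) = order H"
      using A.orbit_stabilizer_theorem[OF xE] .
    then have "card (orbit H \<phi> x) dvd p ^ k" using ordH unfolding order_def by (metis dvd_triv_left)
    then obtain i where i: "i \<le> k" "card (orbit H \<phi> x) = p ^ i" using divides_primepow_nat[OF pr] by auto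
    show ?thesis
    proof (cases "i = 0")
      case True
      then have c1: "card (orbit H \<phi> x) = 1" using i by simp
      have "x \<in> orbit H \<phi> x" using A.orbit_refl[OF xE] .
      then have oe: "orbit H \<phi> x = {x}" using c1 by (metis card_1_singletonE singletonD)
      have "\<forall>h\<in>carrier H. \<phi> h x = x"
      proof
        fix h assume "h \<in> carrier H"
        then have "\<phi> h x \<in> orbit H \<phi> x" unfolding orbit_def by auto
        then show "\<phi> h x = x" using oe by auto
      qed
      then have "x \<in> F" using that R_def F_def by auto
      then show ?thesis using that R_def by auto
    next
      case False
      then show ?thesis using i by simp
    qed
  qed
  define Q where "Q = (\<lambda>x. orbit H \<phi> x) ` R"
  have finR: "finite R" using finSS R_def by auto
  have UQ: "\<Union>Q = R"
  proof
    show "\<Union>Q \<subseteq> R" using orbR Q_def by auto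
    show "R \<subseteq> \<Union>Q" unfolding Q_def using A.orbit_refl R_def OE by blast
  qed
  have pw: "pairwise disjnt Q"
    unfolding pairwise_def disjnt_def Q_def
  proof (clarify)
    fix x y assume xR: "x \<in> R" and yR: "y \<in> R" and ne: "orbit H \<phi> x \<noteq> orbit H \<phi> y"
    have "orbit H \<phi> x \<in> orbits H E \<phi>" "orbit H \<phi> y \<in> orbits H E \<phi>"
      unfolding orbits_def using xR yR R_def OE by auto
    then show "orbit H \<phi> x \<inter> orbit H \<phi> y = {}" using A.disjoint_union ne by blast
  qed
  have finQ: "finite Y0" if "Y0 \<in> Q" for Y0
  proof -
    have "Y0 \<subseteq> R" using that UQ by blast
    then show ?thesis using finR finite_subset by blast
  qed
  have "card R = sum card Q" using card_Union_disjoint[OF pw finQ] UQ by simp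
  moreover have "p dvd sum card Q" by (rule dvd_sum) (use orbp Q_def in auto)
  ultimately have "p dvd card R" by simp
  moreover have "card SS = card F + card R"
  proof -
    have FS: "F \<subseteq> SS" unfolding F_def by blast
    then have "card R = card SS - card F" unfolding R_def using finSS by (simp add: card_Diff_subset finite_subset)
    moreover have "card F \<le> card SS" using FS finSS by (simp add: card_mono)
    ultimately show ?thesis by simp
  qed
  ultimately obtain c where "card SS = card F + p * c" by (auto elim: dvdE)
  then show ?thesis unfolding F_def by simp
qed

locale pgrp = group +
  fixes p n
  assumes prime: "Factorial_Ring.prime (p::nat)" and fin: "finite (carrier G)" and crd: "card (carrier G) = p ^ n"
begin

lemma sub_card: assumes "subgroup H G" shows "\<exists>j\<le>n. card H = p ^ j"
proof -
  have "card (rcosets H) * card H = p ^ n" using lagrange[OF assms] crd unfolding order_def by simp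
  then have "card H dvd p ^ n" by (metis dvd_triv_right)
  then show ?thesis using divides_primepow_nat[OF prime] by auto
qed

lemma ord_dvd: "g \<in> carrier G \<Longrightarrow> ord g dvd p ^ n"
  using ord_dvd_group_order crd unfolding order_def by metis

lemma coprime_ord: assumes "g \<in> carrier G" "\<not> int p dvd d" shows "coprime d (int (ord g))"
proof -
  obtain i where "ord g = p ^ i" using ord_dvd[OF assms(1)] divides_primepow_nat[OF prime] by auto
  then have "int (ord g) = int p ^ i" by simp
  moreover have "Factorial_Ring.prime (int p)" using prime by simp
  ultimately have "coprime (int p) d" using assms(2) by (simp add: prime_imp_coprime)
  then have "coprime d (int p)" by (simp add: coprime_commute)
  then show ?thesis using \<open>int (ord g) = int p ^ i\<close> by simp
qed

end

context group begin

lemma pow_coprime_in: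
  assumes K: "subgroup K G" and g: "g \<in> carrier G" and gd: "g [^] (d::int) \<in> K"
    and cp: "coprime d (int (ord g))"
  shows "g \<in> K"
proof -
  obtain u v where uv: "u * d + v * int (ord g) = gcd d (int (ord g))" using bezout_int by blast
  then have uv1: "u * d + v * int (ord g) = 1" using cp by simp
  have "g = g [^] (u * d + v * int (ord g))" using uv1 g by simp
  also have "\<dots> = (g [^] d) [^] u \<otimes> (g [^] int (ord g)) [^] v"
    using g by (simp add: int_pow_mult int_pow_pow mult.commute)
  also have "(g [^] int (ord g)) = \<one>" using g by (simp add: int_pow_int)
  finally have "g = (g [^] d) [^] u" using g by simp
  then show ?thesis using subgroup_int_pow_closed[OF K gd] by metis
qed

lemma conj_image: "K \<subseteq> carrier G \<Longrightarrow> g \<in> carrier G \<Longrightarrow> g <# K #> inv g = (\<lambda>k. g \<otimes> k \<otimes> inv g) ` K"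
  unfolding l_coset_def r_coset_def by auto

end

context pgrp begin

lemma max_conj:
  assumes max: "maximal_subgroup M G" and g: "g \<in> carrier G" and m: "m \<in> M"
  shows "g \<otimes> m \<otimes> inv g \<in> M"
proof -
  have M: "subgroup M G" and Mne: "M \<noteq> carrier G"
    and maxl: "\<And>H. subgroup H G \<Longrightarrow> M \<subseteq> H \<Longrightarrow> H = M \<or> H = carrier G"
    using max unfolding maximal_subgroup_def by auto
  have Mc: "M \<subseteq> carrier G" using M subgroup.subset by blast
  define E where "E = {K. subgroup K G}"
  define \<phi> where "\<phi> = (\<lambda>g. \<lambda>K\<in>E. g <# K #> inv g)"
  interpret act: group_action G E \<phi>
    using action_by_conjugation_on_subgroups_set unfolding E_def \<phi>_def .
  have ME: "M \<in> E" using M E_def by simp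
  have phiM: "\<phi> x M = (\<lambda>k. x \<otimes> k \<otimes> inv x) ` M" if "x \<in> carrier G" for x
    using ME conj_image[OF Mc that] unfolding \<phi>_def by simp
  define N where "N = stabilizer G \<phi> M"
  have Nsub: "subgroup N G" unfolding N_def by (rule act.stabilizer_subgroup[OF ME])
  have Nchar: "x \<in> N \<longleftrightarrow> x \<in> carrier G \<and> \<phi> x M = M" for x
    unfolding N_def stabilizer_def by simp
  have selfc: "(\<lambda>k. h \<otimes> k \<otimes> inv h) ` M = M" if "h \<in> M" for h
  proof
    have hc: "h \<in> carrier G" using that Mc by blast
    show "(\<lambda>k. h \<otimes> k \<otimes> inv h) ` M \<subseteq> M"
      using that M by (auto intro!: subgroup.m_closed subgroup.m_inv_closed)
    show "M \<subseteq> (\<lambda>k. h \<otimes> k \<otimes> inv h) ` M"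
    proof
      fix k assume k: "k \<in> M"
      have kc: "k \<in> carrier G" using k Mc by blast
      have "inv h \<otimes> k \<otimes> h \<in> M" using k that M by (auto intro!: subgroup.m_closed subgroup.m_inv_closed)
      moreover have "k = h \<otimes> (inv h \<otimes> k \<otimes> h) \<otimes> inv h" using hc kc by (simp add: m_assoc)
      ultimately show "k \<in> (\<lambda>k. h \<otimes> k \<otimes> inv h) ` M" by blast
    qed
  qed
  have MN: "M \<subseteq> N"
  proof
    fix h assume h: "h \<in> M"
    then have hc: "h \<in> carrier G" using Mc by blast
    show "h \<in> N" using Nchar phiM[OF hc] selfc[OF h] hc by simp
  qed
  show ?thesis
  proof (cases "N = carrier G")
    case True
    then have "\<phi> g M = M" using Nchar g by blast
    then show ?thesis using phiM[OF g] m by blast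
  next
    case False
    then have NM: "N = M" using maxl[OF Nsub MN] by blast
    obtain j where j: "j \<le> n" "card M = p ^ j" using sub_card[OF M] by blast
    have "card M \<noteq> card (carrier G)"
      using Mne Mc fin card_subset_eq by blast
    then have jn: "j < n" using j crd by (cases "j = n") auto
    define SS where "SS = orbit G \<phi> M"
    have "card SS * card M = p ^ n"
      using act.orbit_stabilizer_theorem[OF ME] NM crd unfolding SS_def N_def order_def by simp
    then have "card SS * p ^ j = p ^ (n - j) * p ^ j" using j jn by (simp add: power_add[symmetric])
    then have "card SS = p ^ (n - j)" using prime by (simp add: prime_gt_0_nat)
    then have pSS: "p dvd card SS" using jn by simp
    interpret sub: group_action "G\<lparr>carrier := M\<rparr>" E \<phi> using act.induced_action[OF M] .
    have SSim: "SS = (\<lambda>x. \<phi> x M) ` carrier G" unfolding SS_def orbit_def by auto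
    have phiE: "\<phi> x M \<in> E" if "x \<in> carrier G" for x using act.element_image[OF that ME refl] .
    have SSE: "SS \<subseteq> E" unfolding SSim using phiE by blast
    have finSS: "finite SS" using SSim fin by simp
    have inv: "\<phi> h x \<in> SS" if hx: "h \<in> M" "x \<in> SS" for h x
    proof -
      have "x \<in> (\<lambda>x. \<phi> x M) ` carrier G" using hx(2) unfolding SSim .
      then obtain y where y1: "y \<in> carrier G" and y2: "x = \<phi> y M" by (rule imageE)
      have hc: "h \<in> carrier G" using hx(1) Mc by blast
      have e: "\<phi> (h \<otimes> y) M = \<phi> h (\<phi> y M)" by (rule act.composition_rule[OF ME hc y1])
      have "\<phi> (h \<otimes> y) M \<in> (\<lambda>x. \<phi> x M) ` carrier G" using hc y1 by (intro imageI) simp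
      then have "\<phi> h (\<phi> y M) \<in> SS" unfolding SSim e .
      then show ?thesis unfolding y2 .
    qed
    define F where "F = {x \<in> SS. \<forall>h\<in>carrier (G\<lparr>carrier := M\<rparr>). \<phi> h x = x}"
    have cM: "card (carrier (G\<lparr>carrier := M\<rparr>)) = p ^ j" using j by simp
    have inv': "\<And>h x. h \<in> carrier (G\<lparr>carrier := M\<rparr>) \<Longrightarrow> x \<in> SS \<Longrightarrow> \<phi> h x \<in> SS"
      using inv by simp
    have "card SS mod p = card F mod p"
      unfolding F_def by (rule fix_mod[OF sub.group_action_axioms cM prime SSE finSS inv'])
    then have pF: "p dvd card F" using pSS by (simp add: mod_eq_0_iff_dvd[symmetric])
    have MSS: "M \<in> SS" unfolding SS_def using act.orbit_refl[OF ME] .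
    have "\<phi> h M = M" if "h \<in> M" for h using MN that Nchar by blast
    then have MF: "M \<in> F" unfolding F_def using MSS by simp
    have FSS: "F \<subseteq> SS" unfolding F_def by blast
    have finF: "finite F" using finSS FSS finite_subset by blast
    have "card F \<noteq> 0" using MF finF by auto
    then have "card F \<ge> p" using pF by (simp add: dvd_imp_le)
    moreover have "p \<ge> 2" using prime_ge_2_nat[OF prime] .
    ultimately have "card F \<ge> 2" by linarith
    have "\<exists>K\<in>F. K \<noteq> M"
    proof (rule ccontr)
      assume "\<not> (\<exists>K\<in>F. K \<noteq> M)"
      then have "F \<subseteq> {M}" by blast
      then have "card F \<le> 1" using card_mono[of "{M}" F] by simp
      then show False using \<open>card F \<ge> 2\<close> by simp
    qed
    then obtain K where K: "K \<in> F" "K \<noteq> M" by blast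
    have KSS: "K \<in> SS" using K(1) FSS by blast
    then have "K \<in> (\<lambda>x. \<phi> x M) ` carrier G" unfolding SSim .
    then obtain y where y1: "y \<in> carrier G" and y2: "K = \<phi> y M" by (rule imageE)
    note y = y1 y2
    have KE: "K \<in> E" using KSS SSE by blast
    have Kall: "\<forall>h\<in>carrier (G\<lparr>carrier := M\<rparr>). \<phi> h K = K" using K(1) unfolding F_def by blast
    have Kfix: "\<phi> h K = K" if "h \<in> M" for h using Kall that by simp
    have inN: "inv y \<otimes> h \<otimes> y \<in> M" if h: "h \<in> M" for h
    proof -
      have hc: "h \<in> carrier G" using h Mc by blast
      have "\<phi> (inv y \<otimes> h \<otimes> y) M = \<phi> (inv y \<otimes> h) (\<phi> y M)"
        using act.composition_rule[OF ME _ y(1), of "inv y \<otimes> h"] hc y by simp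
      also have "\<dots> = \<phi> (inv y) (\<phi> h K)" using act.composition_rule[OF KE, of "inv y" h] hc y by simp
      also have "\<dots> = \<phi> (inv y) (\<phi> y M)" using Kfix h y by simp
      also have "\<dots> = \<phi> (inv y \<otimes> y) M" using act.composition_rule[OF ME, of "inv y" y] y by simp
      also have "\<dots> = \<phi> \<one> M" using y by simp
      also have "\<dots> = M" using act.id_eq_one[symmetric] ME by (simp add: restrict_apply')
      finally have "\<phi> (inv y \<otimes> h \<otimes> y) M = M" .
      then have "inv y \<otimes> h \<otimes> y \<in> N" using Nchar hc y by simp
      then show ?thesis using NM by simp
    qed
    have KM: "M \<subseteq> K"
    proof
      fix h assume h: "h \<in> M"
      have hc: "h \<in> carrier G" using h Mc by blast
      have "h = y \<otimes> (inv y \<otimes> h \<otimes> y) \<otimes> inv y" using hc y by (simp add: m_assoc)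
      then have "h \<in> (\<lambda>k. y \<otimes> k \<otimes> inv y) ` M" using inN[OF h] by blast
      then show "h \<in> K" using y phiM by simp
    qed
    have "inj_on (\<lambda>k. y \<otimes> k \<otimes> inv y) M"
      unfolding inj_on_def
    proof (intro ballI impI)
      fix u v assume uv: "u \<in> M" "v \<in> M" and eq: "y \<otimes> u \<otimes> inv y = y \<otimes> v \<otimes> inv y"
      have "u \<in> carrier G" "v \<in> carrier G" using uv Mc by auto
      then show "u = v" using eq y(1) by simp
    qed
    then have "card K = card M" using y phiM card_image by simp
    moreover have "finite K" using y phiM finite_subset[OF Mc fin] by simp
    ultimately have "M = K" using KM card_subset_eq by metis
    then have "K = M" by simp
    then show ?thesis using K by simp
  qed
qed


lemma S_sub:
  assumes M: "subgroup M G" and cc: "\<And>g m. g \<in> carrier G \<Longrightarrow> m \<in> M \<Longrightarrow> g \<otimes> m \<otimes> inv g \<in> M"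
    and h: "h \<in> carrier G"
  shows "subgroup {x. \<exists>m\<in>M. \<exists>i::int. x = m \<otimes> h [^] i} G"
proof (rule subgroupI)
  have Mc: "M \<subseteq> carrier G" using M subgroup.subset by blast
  show "{x. \<exists>m\<in>M. \<exists>i::int. x = m \<otimes> h [^] i} \<subseteq> carrier G"
  proof
    fix x assume "x \<in> {x. \<exists>m\<in>M. \<exists>i::int. x = m \<otimes> h [^] i}"
    then obtain m i where m: "m \<in> M" and x: "x = m \<otimes> h [^] (i::int)" by blast
    have "m \<in> carrier G" using m Mc by blast
    then show "x \<in> carrier G" using x h by simp
  qed
  have "\<one> = \<one> \<otimes> h [^] (0::int)" using h by simp
  then have "\<one> \<in> {x. \<exists>m\<in>M. \<exists>i::int. x = m \<otimes> h [^] i}" using subgroup.one_closed[OF M] by blast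
  then show "{x. \<exists>m\<in>M. \<exists>i::int. x = m \<otimes> h [^] i} \<noteq> {}" by blast
next
  have Mc: "M \<subseteq> carrier G" using M subgroup.subset by blast
  fix x assume "x \<in> {x. \<exists>m\<in>M. \<exists>i::int. x = m \<otimes> h [^] i}"
  then obtain m i where m: "m \<in> M" and x: "x = m \<otimes> h [^] (i::int)" by blast
  have mc: "m \<in> carrier G" using m Mc by blast
  define k where "k = h [^] (- i)"
  have kc: "k \<in> carrier G" using h k_def by simp
  have m': "k \<otimes> inv m \<otimes> inv k \<in> M" using cc[OF kc] subgroup.m_inv_closed[OF M m] by blast
  have "inv x = inv (h [^] i) \<otimes> inv m" using x mc h by (simp add: inv_mult_group)
  also have "\<dots> = k \<otimes> inv m" using h k_def by (simp add: int_pow_neg)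
  also have "\<dots> = (k \<otimes> inv m \<otimes> inv k) \<otimes> k" using kc mc by (simp add: m_assoc)
  finally have "inv x = (k \<otimes> inv m \<otimes> inv k) \<otimes> h [^] (- i)" unfolding k_def .
  then show "inv x \<in> {x. \<exists>m\<in>M. \<exists>i::int. x = m \<otimes> h [^] i}" using m' by blast
next
  have Mc: "M \<subseteq> carrier G" using M subgroup.subset by blast
  fix x y assume "x \<in> {x. \<exists>m\<in>M. \<exists>i::int. x = m \<otimes> h [^] i}" "y \<in> {x. \<exists>m\<in>M. \<exists>i::int. x = m \<otimes> h [^] i}"
  then obtain m1 i m2 j where m1: "m1 \<in> M" and x: "x = m1 \<otimes> h [^] (i::int)"
    and m2: "m2 \<in> M" and y: "y = m2 \<otimes> h [^] (j::int)" by blast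
  have mc: "m1 \<in> carrier G" "m2 \<in> carrier G" using m1 m2 Mc by auto
  define k where "k = h [^] i"
  have kc: "k \<in> carrier G" using h k_def by simp
  have m': "m1 \<otimes> (k \<otimes> m2 \<otimes> inv k) \<in> M" using cc[OF kc m2] m1 subgroup.m_closed[OF M] by blast
  have "x \<otimes> y = m1 \<otimes> k \<otimes> (m2 \<otimes> h [^] j)" using x y k_def by simp
  also have "\<dots> = m1 \<otimes> (k \<otimes> m2 \<otimes> inv k) \<otimes> (k \<otimes> h [^] j)" using kc mc h by (simp add: m_assoc)
  also have "k \<otimes> h [^] j = h [^] (i + j)" using h k_def by (simp add: int_pow_mult)
  finally have "x \<otimes> y = m1 \<otimes> (k \<otimes> m2 \<otimes> inv k) \<otimes> h [^] (i + j)" .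
  then show "x \<otimes> y \<in> {x. \<exists>m\<in>M. \<exists>i::int. x = m \<otimes> h [^] i}" using m' by blast
qed

lemma max_S:
  assumes max: "maximal_subgroup M G" and h: "h \<in> carrier G" and hM: "h \<notin> M"
  shows "{x. \<exists>m\<in>M. \<exists>i::int. x = m \<otimes> h [^] i} = carrier G"
proof -
  have M: "subgroup M G"
    and maxl: "\<And>H. subgroup H G \<Longrightarrow> M \<subseteq> H \<Longrightarrow> H = M \<or> H = carrier G"
    using max unfolding maximal_subgroup_def by auto
  have Mc: "M \<subseteq> carrier G" using M subgroup.subset by blast
  have sub: "subgroup {x. \<exists>m\<in>M. \<exists>i::int. x = m \<otimes> h [^] i} G"
    using S_sub[OF M _ h] max_conj[OF max] by blast
  have "M \<subseteq> {x. \<exists>m\<in>M. \<exists>i::int. x = m \<otimes> h [^] i}"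
  proof
    fix m assume m: "m \<in> M"
    then have "m = m \<otimes> h [^] (0::int)" using Mc h by auto
    then show "m \<in> {x. \<exists>m\<in>M. \<exists>i::int. x = m \<otimes> h [^] i}" using m by blast
  qed
  moreover have "h \<in> {x. \<exists>m\<in>M. \<exists>i::int. x = m \<otimes> h [^] i}"
  proof -
    have "h = \<one> \<otimes> h [^] (1::int)" using h by simp
    then show ?thesis using subgroup.one_closed[OF M] by blast
  qed
  ultimately show ?thesis using maxl[OF sub] hM by blast
qed

lemma max_pow:
  assumes max: "maximal_subgroup M G" and g: "g \<in> carrier G"
  shows "g [^] p \<in> M"
proof (rule ccontr)
  assume ngp: "g [^] p \<notin> M"
  have M: "subgroup M G" using max unfolding maximal_subgroup_def by auto
  define h where "h = g [^] (int p)"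
  have hc: "h \<in> carrier G" using g h_def by simp
  have hM: "h \<notin> M" using ngp h_def by (simp add: int_pow_int)
  have "g \<in> {x. \<exists>m\<in>M. \<exists>i::int. x = m \<otimes> h [^] i}" using max_S[OF max hc hM] g by blast
  then obtain m i where m: "m \<in> M" and gm: "g = m \<otimes> h [^] (i::int)" by blast
  have mc: "m \<in> carrier G" using m M subgroup.subset by blast
  have hi: "h [^] i = g [^] (int p * i)" using g h_def by (simp add: int_pow_pow)
  have "g [^] (1 - int p * i) = g \<otimes> inv (g [^] (int p * i))" using g by (simp add: int_pow_diff)
  also have "\<dots> = m"
  proof -
    have gX: "g = m \<otimes> g [^] (int p * i)" using gm unfolding hi .
    have "g \<otimes> inv (g [^] (int p * i)) = (m \<otimes> g [^] (int p * i)) \<otimes> inv (g [^] (int p * i))"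
      using gX by (rule arg_cong[where f="\<lambda>z. z \<otimes> inv (g [^] (int p * i))"])
    also have "\<dots> = m" using mc g by (simp add: m_assoc)
    finally show ?thesis .
  qed
  finally have gd: "g [^] (1 - int p * i) \<in> M" using m by simp
  have "\<not> int p dvd (1 - int p * i)"
  proof
    assume a1: "int p dvd (1 - int p * i)"
    have "int p dvd (1 - int p * i) + int p * i" using dvd_add[OF a1 dvd_triv_left[of "int p" i]] .
    then have "int p dvd 1" by simp
    then show False using prime by (simp add: prime_gt_1_nat)
  qed
  then have "coprime (1 - int p * i) (int (ord g))" using coprime_ord[OF g] by blast
  then have "g \<in> M" using pow_coprime_in[OF M g gd] by blast
  then have "g [^] (int p) \<in> M" using subgroup_int_pow_closed[OF M] by blast
  then show False using ngp by (simp add: int_pow_int)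
qed

lemma max_cmt:
  assumes max: "maximal_subgroup M G" and g: "g \<in> carrier G" and h: "h \<in> carrier G"
  shows "cmt G g h \<in> M"
proof -
  have M: "subgroup M G" using max unfolding maximal_subgroup_def by auto
  have Mc: "M \<subseteq> carrier G" using M subgroup.subset by blast
  show ?thesis
  proof (cases "h \<in> M")
    case True
    have "g \<otimes> h \<otimes> inv g \<in> M" using max_conj[OF max g True] .
    moreover have "inv h \<in> M" using subgroup.m_inv_closed[OF M True] .
    ultimately show ?thesis unfolding cmt_def using subgroup.m_closed[OF M] by blast
  next
    case hM: False
    show ?thesis
    proof (cases "g \<in> M")
      case True
      have "h \<otimes> inv g \<otimes> inv h \<in> M" using max_conj[OF max h subgroup.m_inv_closed[OF M True]] h by simp
      then have "g \<otimes> (h \<otimes> inv g \<otimes> inv h) \<in> M" using subgroup.m_closed[OF M True] by blast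
      moreover have "g \<otimes> (h \<otimes> inv g \<otimes> inv h) = cmt G g h" unfolding cmt_def using g h by (simp add: m_assoc)
      ultimately show ?thesis by simp
    next
      case gM: False
      have "h \<in> {x. \<exists>m\<in>M. \<exists>i::int. x = m \<otimes> g [^] i}" using max_S[OF max g gM] h by blast
      then obtain m i where m: "m \<in> M" and hm: "h = m \<otimes> g [^] (i::int)" by blast
      have mc: "m \<in> carrier G" using m Mc by blast
      have gi: "g [^] i \<otimes> inv g = inv g \<otimes> g [^] i"
      proof -
        have e1: "g [^] (i + -1) = g [^] i \<otimes> g [^] (-1::int)" using int_pow_mult[OF g, of i "-1"] .
        have e2: "g [^] (-1 + i) = g [^] (-1::int) \<otimes> g [^] i" using int_pow_mult[OF g, of "-1" i] .
        have e3: "g [^] (-1::int) = inv g" using int_pow_neg[OF g, of 1] g by simp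
        have e4: "i + -1 = -1 + i" by simp
        show ?thesis using e1 e2 e3 e4 by metis
      qed
      have "cmt G g h = g \<otimes> m \<otimes> (g [^] i \<otimes> inv g) \<otimes> inv (g [^] i) \<otimes> inv m"
        unfolding cmt_def hm using g mc by (simp add: m_assoc inv_mult_group)
      also have "\<dots> = g \<otimes> m \<otimes> inv g \<otimes> inv m" unfolding gi using g mc by (simp add: m_assoc)
      finally have e: "cmt G g h = (g \<otimes> m \<otimes> inv g) \<otimes> inv m" .
      have "g \<otimes> m \<otimes> inv g \<in> M" using max_conj[OF max g m] .
      then show ?thesis unfolding e using subgroup.m_closed[OF M] subgroup.m_inv_closed[OF M m] by blast
    qed
  qed
qed

end

context group begin

lemma ord_dvd_Lcm_S:
  assumes H: "subgroup H G" "H \<noteq> carrier G" "\<not> abelian_set G H" and g: "g \<in> H"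
  shows "ord g dvd Lcm {grp_exp G H | H. subgroup H G \<and> H \<noteq> carrier G \<and> \<not> abelian_set G H}"
proof -
  have "ord g dvd grp_exp G H" unfolding grp_exp_def using g by (intro dvd_Lcm) blast
  moreover have "grp_exp G H \<in> {grp_exp G H | H. subgroup H G \<and> H \<noteq> carrier G \<and> \<not> abelian_set G H}"
    using H by blast
  ultimately show ?thesis by (meson dvd_Lcm dvd_trans)
qed

lemma ec_imp_2gen:
  assumes ec: "exponent_critical G" and na: "\<not> abelian_set G (carrier G)"
  shows "two_generated G"
proof (rule ccontr)
  assume n2: "\<not> two_generated G"
  define S where "S = {grp_exp G H | H. subgroup H G \<and> H \<noteq> carrier G \<and> \<not> abelian_set G H}"
  have gp: "generate G {u, v} \<noteq> carrier G" if "u \<in> carrier G" "v \<in> carrier G" for u v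
    using n2 that unfolding two_generated_def by blast
  have ordS: "ord g dvd Lcm S" if g: "g \<in> carrier G" and h: "h \<in> carrier G" and gh: "g \<otimes> h \<noteq> h \<otimes> g" for g h
  proof -
    define H where "H = generate G {g, h}"
    have Hs: "subgroup H G" unfolding H_def using g h by (intro generate_is_subgroup) auto
    have gH: "g \<in> H" "h \<in> H" unfolding H_def by (auto intro: generate.incl)
    have "\<not> abelian_set G H" unfolding abelian_set_def using gH gh by blast
    then show ?thesis unfolding S_def using ord_dvd_Lcm_S[OF Hs gp[OF g h, folded H_def]] gH by blast
  qed
  obtain x y where x: "x \<in> carrier G" and y: "y \<in> carrier G" and xy: "x \<otimes> y \<noteq> y \<otimes> x"
    using na unfolding abelian_set_def by blast
  have all: "ord g dvd Lcm S" if g: "g \<in> carrier G" for g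
  proof (cases "\<exists>h\<in>carrier G. g \<otimes> h \<noteq> h \<otimes> g")
    case True
    then show ?thesis using ordS g by blast
  next
    case False
    then have gc: "\<And>h. h \<in> carrier G \<Longrightarrow> g \<otimes> h = h \<otimes> g" by blast
    have xg: "x \<otimes> g \<in> carrier G" using x g by simp
    have "(x \<otimes> g) \<otimes> y \<noteq> y \<otimes> (x \<otimes> g)"
    proof
      assume e: "(x \<otimes> g) \<otimes> y = y \<otimes> (x \<otimes> g)"
      have "(x \<otimes> g) \<otimes> y = (x \<otimes> y) \<otimes> g" using x y g gc[OF y] by (simp add: m_assoc)
      moreover have "y \<otimes> (x \<otimes> g) = (y \<otimes> x) \<otimes> g" using x y g by (simp add: m_assoc)
      ultimately have "(x \<otimes> y) \<otimes> g = (y \<otimes> x) \<otimes> g" using e by simp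
      then show False using xy x y g by simp
    qed
    then have d2: "ord (x \<otimes> g) dvd Lcm S" using ordS[OF xg y] by blast
    have d1: "ord x dvd Lcm S" using ordS[OF x y xy] .
    define L where "L = lcm (ord x) (ord (x \<otimes> g))"
    have com: "inv x \<otimes> (x \<otimes> g) = (x \<otimes> g) \<otimes> inv x"
    proof -
      have "inv x \<otimes> (x \<otimes> g) = g" using x g by simp
      moreover have "(x \<otimes> g) \<otimes> inv x = g"
      proof -
        have "(x \<otimes> g) \<otimes> inv x = (g \<otimes> x) \<otimes> inv x" using gc[OF x] by simp
        then show ?thesis using x g by (simp add: m_assoc)
      qed
      ultimately show ?thesis by simp
    qed
    have "g [^] L = (inv x \<otimes> (x \<otimes> g)) [^] L" using x g by simp
    also have "\<dots> = inv x [^] L \<otimes> (x \<otimes> g) [^] L" using pow_mult_distrib[OF com] x g by simp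
    also have "(x \<otimes> g) [^] L = \<one>" using xg by (simp add: pow_eq_id L_def)
    also have "inv x [^] L = inv (x [^] L)" using x by (simp add: nat_pow_inv)
    also have "x [^] L = \<one>" using x by (simp add: pow_eq_id L_def)
    finally have "g [^] L = \<one>" by simp
    then have "ord g dvd L" using g pow_eq_id by blast
    moreover have "L dvd Lcm S" unfolding L_def using d1 d2 by (rule lcm_least)
    ultimately show ?thesis by (rule dvd_trans)
  qed
  have e1: "grp_exp G (carrier G) dvd Lcm S" unfolding grp_exp_def using all by (intro Lcm_least) blast
  have e2: "Lcm S dvd grp_exp G (carrier G)"
  proof (rule Lcm_least)
    fix k assume "k \<in> S"
    then obtain H where H: "subgroup H G" and k: "k = grp_exp G H" unfolding S_def by blast
    have "H \<subseteq> carrier G" using H subgroup.subset by blast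
    then show "k dvd grp_exp G (carrier G)" unfolding k grp_exp_def by (intro Lcm_subset) blast
  qed
  have "grp_exp G (carrier G) = Lcm S" using e1 e2 by (rule dvd_antisym)
  then show False using ec unfolding exponent_critical_def S_def by blast
qed

end


context pgrp begin

lemma cc2_intro:
  assumes "\<And>x y. x \<in> carrier G \<Longrightarrow> y \<in> carrier G \<Longrightarrow> cmt G x y \<in> ctr G"
    and "a \<in> carrier G" "b \<in> carrier G" "generate G {a, b} = carrier G"
  shows "cc2 G a b"
  using assms by (intro cc2.intro cc.intro cc_axioms.intro cc2_axioms.intro is_group) auto

lemma fwd_derived:
  assumes na: "\<not> abelian_set G (carrier G)"
    and M1: "maximal_subgroup M1 G" and M2: "maximal_subgroup M2 G" and ne: "M1 \<noteq> M2"
    and ab1: "abelian_set G M1" and ab2: "abelian_set G M2"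
    and a: "a \<in> carrier G" and b: "b \<in> carrier G" and gen: "generate G {a, b} = carrier G"
  shows "card (derived G (carrier G)) = p"
proof -
  have S1: "subgroup M1 G" and ne1: "M1 \<noteq> carrier G"
    and maxl1: "\<And>H. subgroup H G \<Longrightarrow> M1 \<subseteq> H \<Longrightarrow> H = M1 \<or> H = carrier G"
    using M1 unfolding maximal_subgroup_def by auto
  have S2: "subgroup M2 G"
    and maxl2: "\<And>H. subgroup H G \<Longrightarrow> M2 \<subseteq> H \<Longrightarrow> H = M2 \<or> H = carrier G"
    using M2 unfolding maximal_subgroup_def by auto
  have M1c: "M1 \<subseteq> carrier G" using S1 subgroup.subset by blast
  have M2c: "M2 \<subseteq> carrier G" using S2 subgroup.subset by blast
  have Zc: "z \<in> ctr G" if z1: "z \<in> M1" and z2: "z \<in> M2" for z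
  proof -
    have zc: "z \<in> carrier G" using z1 M1c by blast
    have cs: "subgroup (cent G z) G" using cent_subgroup[OF zc] .
    have c1: "M1 \<subseteq> cent G z"
    proof
      fix m assume m: "m \<in> M1"
      then have "m \<otimes> z = z \<otimes> m" using ab1 z1 unfolding abelian_set_def by blast
      then show "m \<in> cent G z" unfolding cent_def using m M1c by blast
    qed
    have c2: "M2 \<subseteq> cent G z"
    proof
      fix m assume m: "m \<in> M2"
      then have "m \<otimes> z = z \<otimes> m" using ab2 z2 unfolding abelian_set_def by blast
      then show "m \<in> cent G z" unfolding cent_def using m M2c by blast
    qed
    have call: "cent G z = carrier G"
    proof (rule ccontr)
      assume "cent G z \<noteq> carrier G"
      then have "cent G z = M1" using maxl1[OF cs c1] by blast
      then have "M2 \<subseteq> M1" using c2 by simp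
      then have "M1 = M2 \<or> M1 = carrier G" using maxl2[OF S1] by blast
      then show False using ne ne1 by blast
    qed
    show ?thesis unfolding ctr_def
    proof (intro CollectI conjI ballI)
      show "z \<in> carrier G" by (rule zc)
      fix g assume g: "g \<in> carrier G"
      then have "g \<in> cent G z" using call by simp
      then show "z \<otimes> g = g \<otimes> z" unfolding cent_def by simp
    qed
  qed
  have ccax: "cmt G x y \<in> ctr G" if "x \<in> carrier G" "y \<in> carrier G" for x y
    using Zc max_cmt[OF M1 that] max_cmt[OF M2 that] by blast
  interpret C2: cc2 G a b using cc2_intro[OF ccax a b gen] .
  define c where "c = cmt G a b"
  have cc: "c \<in> carrier G" unfolding c_def using a b by simp
  have c1: "c \<noteq> \<one>"
  proof
    assume c1: "c = \<one>"
    have "x \<otimes> y = y \<otimes> x" if xy: "x \<in> carrier G" "y \<in> carrier G" for x y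
    proof -
      obtain i j where r1: "C2.rep x i j" using C2.rep_exists xy(1) by blast
      obtain r s where r2: "C2.rep y r s" using C2.rep_exists xy(2) by blast
      have "cmt G x y = \<one>" using C2.rep_cmt[OF r1 r2] c1 unfolding c_def by simp
      then show ?thesis using cmt_eq_one xy by blast
    qed
    then show False using na unfolding abelian_set_def by blast
  qed
  have cp: "c [^] p = \<one>"
  proof -
    have "a [^] p \<in> ctr G" using Zc max_pow[OF M1 a] max_pow[OF M2 a] by blast
    then have "cmt G (a [^] (int p)) b = \<one>" using b cmt_ctr_left by (simp add: int_pow_int)
    moreover have "cmt G (a [^] (int p)) b = c [^] (int p)" unfolding c_def using C2.cmt_pow_left a b .
    ultimately show ?thesis by (simp add: int_pow_int)
  qed
  have oc: "ord c = p"
  proof -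
    have "ord c dvd p" using cp pow_eq_id cc by blast
    moreover have "ord c \<noteq> 1" using ord_eq_1 cc c1 by blast
    ultimately show ?thesis using prime unfolding prime_nat_iff by blast
  qed
  have "derived G (carrier G) = generate G {c}"
  proof
    have "c \<in> derived G (carrier G)" unfolding c_def using cmt_in_derived[OF a b] .
    then show "generate G {c} \<subseteq> derived G (carrier G)"
      using generate_subgroup_incl[OF _ C2.derived_sub] by blast
    show "derived G (carrier G) \<subseteq> generate G {c}"
      unfolding derived_def
    proof (rule generate_subgroup_incl)
      show "subgroup (generate G {c}) G" using cc by (intro generate_is_subgroup) auto
      show "derived_set G (carrier G) \<subseteq> generate G {c}"
      proof
        fix w assume "w \<in> derived_set G (carrier G)"
        then obtain x y where x: "x \<in> carrier G" and y: "y \<in> carrier G"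
          and w: "w = x \<otimes> y \<otimes> inv x \<otimes> inv y" by blast
        obtain i j where r1: "C2.rep x i j" using C2.rep_exists x by blast
        obtain r s where r2: "C2.rep y r s" using C2.rep_exists y by blast
        have "w = cmt G x y" using w by (simp add: cmt_def)
        also have "\<dots> = c [^] (i * s - j * r)" using C2.rep_cmt[OF r1 r2] unfolding c_def .
        finally show "w \<in> generate G {c}" using generate_pow[OF cc] by blast
      qed
    qed
  qed
  then show ?thesis using generate_pow_card[OF cc] oc by simp
qed

end

context pgrp begin

lemma bwd:
  assumes na: "\<not> abelian_set G (carrier G)"
    and a: "a \<in> carrier G" and b: "b \<in> carrier G" and gen: "generate G {a, b} = carrier G"
    and cd: "card (derived G (carrier G)) = p"
  shows "type_B G"
proof -
  define D where "D = derived G (carrier G)"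
  have Dn: "D \<lhd> G" unfolding D_def using derived_is_normal[OF normal_self] .
  have Ds: "subgroup D G" unfolding D_def by (simp add: derived_is_subgroup)
  have Dc: "D \<subseteq> carrier G" using Ds subgroup.subset by blast
  have finD: "finite D" using Dc fin finite_subset by blast
  have cD: "card D = p" using cd D_def by simp
  define \<phi> where "\<phi> = (\<lambda>g. \<lambda>h\<in>carrier G. g \<otimes> h \<otimes> inv g)"
  interpret act: group_action G "carrier G" \<phi> using action_by_conjugation unfolding \<phi>_def .
  have phiv: "\<phi> g x = g \<otimes> x \<otimes> inv g" if "x \<in> carrier G" for g x
    using that unfolding \<phi>_def by simp
  have invD: "\<phi> g x \<in> D" if "g \<in> carrier G" "x \<in> D" for g x
  proof -
    have "x \<in> carrier G" using that Dc by blast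
    then show ?thesis using phiv normal.inv_op_closed2[OF Dn that] by simp
  qed
  define F where "F = {x \<in> D. \<forall>g\<in>carrier G. \<phi> g x = x}"
  have "card D mod p = card F mod p" unfolding F_def
    by (rule fix_mod[OF act.group_action_axioms crd prime Dc finD invD])
  then have pF: "p dvd card F" using cD by (simp add: mod_eq_0_iff_dvd[symmetric])
  have FD: "F \<subseteq> D" unfolding F_def by blast
  have oneF: "\<one> \<in> F" unfolding F_def using subgroup.one_closed[OF Ds] phiv by simp
  have finF: "finite F" using finD FD finite_subset by blast
  have "card F \<noteq> 0" using oneF finF by auto
  then have "card F \<ge> p" using pF by (simp add: dvd_imp_le)
  then have FeqD: "F = D" using card_seteq[OF finD FD] cD by simp
  have Dctr: "w \<in> ctr G" if w: "w \<in> D" for w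
  proof -
    have wc: "w \<in> carrier G" using w Dc by blast
    show ?thesis unfolding ctr_def
    proof (intro CollectI conjI ballI)
      show "w \<in> carrier G" by (rule wc)
      fix g assume g: "g \<in> carrier G"
      have "w \<in> F" using FeqD w by simp
      then have "\<forall>g\<in>carrier G. \<phi> g w = w" unfolding F_def by blast
      then have "\<phi> g w = w" using g by blast
      then have e: "g \<otimes> w \<otimes> inv g = w" using phiv wc by simp
      have "g \<otimes> w = (g \<otimes> w \<otimes> inv g) \<otimes> g" using g wc by (simp add: m_assoc)
      then show "w \<otimes> g = g \<otimes> w" using e by simp
    qed
  qed
  have ccax: "cmt G x y \<in> ctr G" if "x \<in> carrier G" "y \<in> carrier G" for x y
    using Dctr cmt_in_derived[OF that] D_def by blast
  interpret C2: cc2 G a b using cc2_intro[OF ccax a b gen] .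
  have ordD: "ord w dvd p" if w: "w \<in> D" for w
  proof -
    have wc: "w \<in> carrier G" using w Dc by blast
    define K where "K = generate G {w}"
    have Ks: "subgroup K G" unfolding K_def using wc by (intro generate_is_subgroup) auto
    have KD: "K \<subseteq> D" unfolding K_def using generate_subgroup_incl[OF _ Ds] w by blast
    have gD: "group (G\<lparr>carrier := D\<rparr>)" using subgroup_imp_group[OF Ds] .
    have KsD: "subgroup K (G\<lparr>carrier := D\<rparr>)" using subgroup_incl[OF Ks Ds KD] .
    have "card (rcosets\<^bsub>G\<lparr>carrier := D\<rparr>\<^esub> K) * card K = order (G\<lparr>carrier := D\<rparr>)"
      using group.lagrange[OF gD KsD] .
    moreover have "order (G\<lparr>carrier := D\<rparr>) = p" using cD by (simp add: order_def)
    moreover have "card K dvd card (rcosets\<^bsub>G\<lparr>carrier := D\<rparr>\<^esub> K) * card K" by (rule dvd_triv_right)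
    ultimately have "card K dvd p" by simp
    then show ?thesis using generate_pow_card[OF wc] K_def by simp
  qed
  have wp: "w [^] p = \<one>" if "w \<in> D" for w
    using ordD[OF that] that Dc pow_eq_id by blast
  define c where "c = cmt G a b"
  have cc: "c \<in> carrier G" unfolding c_def using a b by simp
  have cD': "c \<in> D" unfolding c_def D_def using cmt_in_derived[OF a b] .
  have cp: "c [^] p = \<one>" using wp[OF cD'] .
  have c1: "c \<noteq> \<one>"
  proof
    assume c1: "c = \<one>"
    have "x \<otimes> y = y \<otimes> x" if xy: "x \<in> carrier G" "y \<in> carrier G" for x y
    proof -
      obtain i j where r1: "C2.rep x i j" using C2.rep_exists xy(1) by blast
      obtain r s where r2: "C2.rep y r s" using C2.rep_exists xy(2) by blast
      have "cmt G x y = \<one>" using C2.rep_cmt[OF r1 r2] c1 unfolding c_def by simp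
      then show ?thesis using cmt_eq_one xy by blast
    qed
    then show False using na unfolding abelian_set_def by blast
  qed
  have PA: "H = carrier G" if Hs: "subgroup H G" and Hna: "\<not> abelian_set G H" for H
  proof -
    have Hc: "H \<subseteq> carrier G" using Hs subgroup.subset by blast
    obtain x y where xH: "x \<in> H" and yH: "y \<in> H" and xy: "x \<otimes> y \<noteq> y \<otimes> x"
      using Hna unfolding abelian_set_def by blast
    have xc: "x \<in> carrier G" and yc: "y \<in> carrier G" using xH yH Hc by auto
    obtain i j where r1: "C2.rep x i j" using C2.rep_exists xc by blast
    obtain r s where r2: "C2.rep y r s" using C2.rep_exists yc by blast
    define d where "d = i * s - j * r"
    have cxy: "cmt G x y = c [^] d" using C2.rep_cmt[OF r1 r2] unfolding c_def d_def .
    have cxy1: "cmt G x y \<noteq> \<one>" using cmt_eq_one xc yc xy by blast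
    have nd: "\<not> int p dvd d"
    proof
      assume "int p dvd d"
      then obtain k where k: "d = int p * k" by (auto elim: dvdE)
      have "c [^] d = (c [^] (int p)) [^] k" using cc k by (simp add: int_pow_pow)
      also have "\<dots> = \<one>" using cp by (simp add: int_pow_int)
      finally show False using cxy cxy1 by simp
    qed
    define w0 where "w0 = cmt G x y"
    have w0D: "w0 \<in> D" unfolding w0_def D_def using cmt_in_derived[OF xc yc] .
    have w0H: "w0 \<in> H" unfolding w0_def cmt_def using xH yH Hs
      by (intro subgroup.m_closed subgroup.m_inv_closed) auto
    have w0c: "w0 \<in> carrier G" using w0D Dc by blast
    have ow0: "ord w0 = p"
    proof -
      have "ord w0 \<noteq> 1" using ord_eq_1 w0c cxy1 w0_def by blast
      then show ?thesis using ordD[OF w0D] prime unfolding prime_nat_iff by blast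
    qed
    have gw0D: "generate G {w0} \<subseteq> D" using generate_subgroup_incl[OF _ Ds] w0D by blast
    have gw0H: "generate G {w0} \<subseteq> H" using generate_subgroup_incl[OF _ Hs] w0H by blast
    have "card (generate G {w0}) = card D" using generate_pow_card[OF w0c] ow0 cD by simp
    then have "generate G {w0} = D" using card_subset_eq[OF finD gw0D] by simp
    then have DH: "D \<subseteq> H" using gw0H by simp
    have key: "a [^] d \<in> H \<and> b [^] d \<in> H"
    proof
      have "C2.rep (x [^] s \<otimes> y [^] (- j)) (s * i + (- j) * r) (s * j + (- j) * s)"
        using C2.rep_mult[OF C2.rep_pow[OF r1] C2.rep_pow[OF r2]] .
      moreover have "s * i + (- j) * r = d" "s * j + (- j) * s = 0" unfolding d_def by (simp_all add: algebra_simps)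
      ultimately have "C2.rep (x [^] s \<otimes> y [^] (- j)) d 0" by simp
      then have "\<exists>w\<in>derived G (carrier G). x [^] s \<otimes> y [^] (- j) = a [^] d \<otimes> b [^] (0::int) \<otimes> w"
        unfolding C2.rep_def .
      then obtain w where wD0: "w \<in> derived G (carrier G)"
        and e: "x [^] s \<otimes> y [^] (- j) = a [^] d \<otimes> b [^] (0::int) \<otimes> w" by (elim bexE)
      have wD: "w \<in> D" using wD0 D_def by simp
      have wc: "w \<in> carrier G" using wD Dc by blast
      have XH: "x [^] s \<otimes> y [^] (- j) \<in> H"
        using subgroup.m_closed[OF Hs subgroup_int_pow_closed[OF Hs xH] subgroup_int_pow_closed[OF Hs yH]] .
      have iwH: "inv w \<in> H" using DH wD subgroup.m_inv_closed[OF Hs] by blast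
      from e have "(x [^] s \<otimes> y [^] (- j)) \<otimes> inv w = (a [^] d \<otimes> b [^] (0::int) \<otimes> w) \<otimes> inv w"
        by (rule arg_cong[where f="\<lambda>z. z \<otimes> inv w"])
      also have "\<dots> = a [^] d" using a b wc by (simp add: m_assoc)
      finally have "a [^] d = (x [^] s \<otimes> y [^] (- j)) \<otimes> inv w" by simp
      then show "a [^] d \<in> H" using subgroup.m_closed[OF Hs XH iwH] by simp
    next
      have "C2.rep (x [^] (- r) \<otimes> y [^] i) ((- r) * i + i * r) ((- r) * j + i * s)"
        using C2.rep_mult[OF C2.rep_pow[OF r1] C2.rep_pow[OF r2]] .
      moreover have "(- r) * i + i * r = 0" "(- r) * j + i * s = d" unfolding d_def by (simp_all add: algebra_simps)
      ultimately have "C2.rep (x [^] (- r) \<otimes> y [^] i) 0 d" by simp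
      then have "\<exists>w\<in>derived G (carrier G). x [^] (- r) \<otimes> y [^] i = a [^] (0::int) \<otimes> b [^] d \<otimes> w"
        unfolding C2.rep_def .
      then obtain w where wD0: "w \<in> derived G (carrier G)"
        and e: "x [^] (- r) \<otimes> y [^] i = a [^] (0::int) \<otimes> b [^] d \<otimes> w" by (elim bexE)
      have wD: "w \<in> D" using wD0 D_def by simp
      have wc: "w \<in> carrier G" using wD Dc by blast
      have XH: "x [^] (- r) \<otimes> y [^] i \<in> H"
        using subgroup.m_closed[OF Hs subgroup_int_pow_closed[OF Hs xH] subgroup_int_pow_closed[OF Hs yH]] .
      have iwH: "inv w \<in> H" using DH wD subgroup.m_inv_closed[OF Hs] by blast
      from e have "(x [^] (- r) \<otimes> y [^] i) \<otimes> inv w = (a [^] (0::int) \<otimes> b [^] d \<otimes> w) \<otimes> inv w"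
        by (rule arg_cong[where f="\<lambda>z. z \<otimes> inv w"])
      also have "\<dots> = b [^] d" using a b wc by (simp add: m_assoc)
      finally have "b [^] d = (x [^] (- r) \<otimes> y [^] i) \<otimes> inv w" by simp
      then show "b [^] d \<in> H" using subgroup.m_closed[OF Hs XH iwH] by simp
    qed
    have adH: "a [^] d \<in> H" using key by (rule conjunct1)
    have bdH: "b [^] d \<in> H" using key by (rule conjunct2)
    have aH: "a \<in> H" by (rule pow_coprime_in[OF Hs a adH coprime_ord[OF a nd]])
    have bH: "b \<in> H" by (rule pow_coprime_in[OF Hs b bdH coprime_ord[OF b nd]])
    have abH: "{a, b} \<subseteq> H" using aH bH by simp
    have "generate G {a, b} \<subseteq> H" by (rule generate_subgroup_incl[OF abH Hs])
    then have "carrier G \<subseteq> H" unfolding gen .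
    then show ?thesis using Hc by (intro subset_antisym)
  qed
  have ec: "exponent_critical G"
  proof -
    have S0: "{grp_exp G H | H. subgroup H G \<and> H \<noteq> carrier G \<and> \<not> abelian_set G H} = {}"
      using PA by blast
    obtain x y where x: "x \<in> carrier G" and y: "y \<in> carrier G" and xy: "x \<otimes> y \<noteq> y \<otimes> x"
      using na unfolding abelian_set_def by blast
    have x1: "x \<noteq> \<one>" using xy x y by auto
    have "grp_exp G (carrier G) \<noteq> 1"
    proof
      assume e1: "grp_exp G (carrier G) = 1"
      have "ord x dvd grp_exp G (carrier G)" unfolding grp_exp_def using x by (intro dvd_Lcm) blast
      then have "ord x = 1" using e1 by simp
      then show False using ord_eq_1 x x1 by blast
    qed
    then show ?thesis unfolding exponent_critical_def S0 by simp
  qed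
  have abne: "a \<otimes> b \<noteq> b \<otimes> a" using c1 cmt_eq_one a b unfolding c_def by blast
  have centmax: "maximal_subgroup (cent G u) G \<and> abelian_set G (cent G u)"
    if u: "u \<in> carrier G" and v: "v \<in> carrier G" and uv: "u \<otimes> v \<noteq> v \<otimes> u" for u v
  proof -
    have cs: "subgroup (cent G u) G" using cent_subgroup[OF u] .
    have vn: "v \<notin> cent G u" unfolding cent_def using uv by auto
    have cne: "cent G u \<noteq> carrier G" using vn v by blast
    have ab: "abelian_set G (cent G u)" using PA[OF cs] cne by blast
    have "H = cent G u \<or> H = carrier G" if Hs: "subgroup H G" and cH: "cent G u \<subseteq> H" for H
    proof (cases "H = cent G u")
      case False
      then obtain g where gH: "g \<in> H" and gn: "g \<notin> cent G u" using cH by blast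
      have gc: "g \<in> carrier G" using gH Hs subgroup.subset by blast
      have uH: "u \<in> H" using cH u unfolding cent_def by blast
      have "g \<otimes> u \<noteq> u \<otimes> g" using gn gc unfolding cent_def by blast
      then have "\<not> abelian_set G H" unfolding abelian_set_def using gH uH by blast
      then show ?thesis using PA[OF Hs] by blast
    qed simp
    then show ?thesis unfolding maximal_subgroup_def using cs cne ab by blast
  qed
  have m1: "maximal_subgroup (cent G a) G \<and> abelian_set G (cent G a)" using centmax[OF a b abne] .
  have m2: "maximal_subgroup (cent G b) G \<and> abelian_set G (cent G b)" using centmax[OF b a not_sym[OF abne]] .
  have "b \<in> cent G b" "b \<notin> cent G a" unfolding cent_def using b abne by auto
  then have "cent G a \<noteq> cent G b" by blast
  then show ?thesis unfolding type_B_def using ec m1 m2 by blast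
qed

end

theorem theoremD:
  fixes P :: "('a, 'b) monoid_scheme" and p n :: nat
  assumes "group P" and "Factorial_Ring.prime p" and "finite (carrier P)"
    and "card (carrier P) = p ^ n"
    and "\<not> abelian_set P (carrier P)"
  shows "type_B P \<longleftrightarrow> two_generated P \<and> card (derived P (carrier P)) = p"
proof -
  interpret pgrp P p n using assms by (intro pgrp.intro pgrp_axioms.intro) auto
  show ?thesis
  proof
    assume tb: "type_B P"
    then have ec: "exponent_critical P" unfolding type_B_def by blast
    obtain M1 M2 where M: "M1 \<noteq> M2" "maximal_subgroup M1 P" "maximal_subgroup M2 P"
      "abelian_set P M1" "abelian_set P M2" using tb unfolding type_B_def by blast
    have tg: "two_generated P" using ec_imp_2gen[OF ec assms(5)] .
    then obtain a b where a: "a \<in> carrier P" and b: "b \<in> carrier P" and gen: "generate P {a, b} = carrier P"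
      unfolding two_generated_def by blast
    have "card (derived P (carrier P)) = p"
      using fwd_derived[OF assms(5) M(2) M(3) M(1) M(4) M(5) a b gen] .
    then show "two_generated P \<and> card (derived P (carrier P)) = p" using tg by blast
  next
    assume h: "two_generated P \<and> card (derived P (carrier P)) = p"
    then obtain a b where a: "a \<in> carrier P" and b: "b \<in> carrier P" and gen: "generate P {a, b} = carrier P"
      unfolding two_generated_def by blast
    show "type_B P" using bwd[OF assms(5) a b gen] h by blast
  qed
qed

end
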